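(* Let $X,Y$ be real normed linear spaces, $m\ge1$, $n\ge 2$ integers, and $L:X^m\to Y$ a continuous symmetric $m$-linear mapping with $\widehat L\ne 0$. Then \[\left(\frac{\|L\|_{(n)}}{\|\widehat{L}\|}\right)^{1/m}\le \sqrt{n}.\] Moreover, for $n=2$ and $m$ odd, the inequality $\left(\|L\|_{(2)}/\|\widehat{L}\|\right)^{1/m}<\sqrt2$ is strict.
   Context: For real normed spaces $X,Y$, a continuous symmetric $m$-linear map $L:X^m\to Y$ has associated $m$-homogeneous polynomial $\widehat{L}(x)=L(x,\ldots,x)$, with $\|\widehat{L}\|=\sup\{\|\widehat{L}(x)\|:\|x\|\le 1\}$. The notation $L(x_1^{k_1}\cdots x_n^{k_n})$ means $L$ evaluated at the $m$-tuple in which each $x_i$ appears $k_i$ times ($k_1+\cdots+k_n=m$, $k_i\ge 0$ integers). Define \[\|L\|_{(n)}=\sup_{k_1+\cdots+k_n=m}\ \sup\{\|L(x_1^{k_1}\cdots x_n^{k_n})\|:\|x_1\|\le 1,\ldots,\|x_n\|\le 1\}.\] *)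

theory Defs
  imports "HOL-Analysis.Analysis"
begin

text \<open>An m-linear map X^m -> Y is represented as a function on tuples
  (nat => 'a), of which only the entries with index < m matter.\<close>

definition mlinear :: "nat \<Rightarrow> ((nat \<Rightarrow> 'a::real_normed_vector) \<Rightarrow> 'b::real_normed_vector) \<Rightarrow> bool" where
  "mlinear m L \<longleftrightarrow>
     (\<forall>x y. (\<forall>i<m. x i = y i) \<longrightarrow> L x = L y) \<and>
     (\<forall>x i a b. i < m \<longrightarrow> L (x(i := a + b)) = L (x(i := a)) + L (x(i := b))) \<and>
     (\<forall>x i c a. i < m \<longrightarrow> L (x(i := c *\<^sub>R a)) = c *\<^sub>R L (x(i := a)))"

definition msymmetric :: "nat \<Rightarrow> ((nat \<Rightarrow> 'a) \<Rightarrow> 'b) \<Rightarrow> bool" where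
  "msymmetric m L \<longleftrightarrow> (\<forall>\<sigma> x. \<sigma> permutes {..<m} \<longrightarrow> L (x \<circ> \<sigma>) = L x)"

text \<open>Continuity on X^m (product topology), stated sequentially (X^m is metrizable).\<close>
definition mcontinuous :: "nat \<Rightarrow> ((nat \<Rightarrow> 'a::real_normed_vector) \<Rightarrow> 'b::real_normed_vector) \<Rightarrow> bool" where
  "mcontinuous m L \<longleftrightarrow>
     (\<forall>s x. (\<forall>i<m. (\<lambda>k. s k i) \<longlonglongrightarrow> x i) \<longrightarrow> (\<lambda>k. L (s k)) \<longlonglongrightarrow> L x)"

definition hatp :: "((nat \<Rightarrow> 'a) \<Rightarrow> 'b) \<Rightarrow> 'a \<Rightarrow> 'b" where
  "hatp L x = L (\<lambda>_. x)"

definition hat_norm :: "((nat \<Rightarrow> 'a::real_normed_vector) \<Rightarrow> 'b::real_normed_vector) \<Rightarrow> real" where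
  "hat_norm L = (SUP x\<in>cball 0 1. norm (hatp L x))"

text \<open>Given multiplicities k 0, ..., k (n-1), position j of the m-tuple
  x_1^{k_1} ... x_n^{k_n} is occupied by the vector with index block_idx k j
  (blocks of consecutive positions).\<close>
definition block_idx :: "(nat \<Rightarrow> nat) \<Rightarrow> nat \<Rightarrow> nat" where
  "block_idx k j = (LEAST i. j < (\<Sum>l<Suc i. k l))"

definition Lpow :: "((nat \<Rightarrow> 'a) \<Rightarrow> 'b) \<Rightarrow> (nat \<Rightarrow> nat) \<Rightarrow> (nat \<Rightarrow> 'a) \<Rightarrow> 'b" where
  "Lpow L k xs = L (\<lambda>j. xs (block_idx k j))"

definition norm_n :: "nat \<Rightarrow> nat \<Rightarrow> ((nat \<Rightarrow> 'a::real_normed_vector) \<Rightarrow> 'b::real_normed_vector) \<Rightarrow> real" where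
  "norm_n m n L = (SUP p\<in>{(k, xs). (\<Sum>i<n. k i) = m \<and> (\<forall>i<n. norm (xs i) \<le> 1)}.
                     norm (Lpow L (fst p) (snd p)))"

end

theory Submission
  imports Defs
begin


lemma mlin_dep: "mlinear m L \<Longrightarrow> (\<And>i. i<m \<Longrightarrow> x i = y i) \<Longrightarrow> L x = L y"
  unfolding mlinear_def by blast

lemma mlin_linear:
  assumes "mlinear m L" "j < m"
  shows "linear (\<lambda>v. L (x(j:=v)))"
proof (rule linearI)
  fix a b show "L (x(j := a + b)) = L (x(j := a)) + L (x(j := b))"
    using assms unfolding mlinear_def by blast
next
  fix c a show "L (x(j := c *\<^sub>R a)) = c *\<^sub>R L (x(j := a))"
    using assms unfolding mlinear_def by blast
qed

lemma mlin_slot_scale: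
  assumes "mlinear m L" "j < m"
  shows "L (x(j := c *\<^sub>R a)) = c *\<^sub>R L (x(j := a))"
  using assms unfolding mlinear_def by blast

lemma mlin_slot_add:
  assumes "mlinear m L" "j < m"
  shows "L (x(j := a + b)) = L (x(j := a)) + L (x(j := b))"
  using assms unfolding mlinear_def by blast

lemma mlin_slot_minus:
  assumes "mlinear m L" "j < m"
  shows "L (x(j := - a)) = - L (x(j := a))"
  using mlin_slot_scale[OF assms, of x "-1" a] by simp

lemma mlin_slot_diff:
  assumes "mlinear m L" "j < m"
  shows "L (x(j := a - b)) = L (x(j := a)) - L (x(j := b))"
  using mlin_slot_add[OF assms, of x a "-b"] mlin_slot_minus[OF assms, of x b] by simp

lemma mlin_prod_scale_aux:
  assumes "mlinear m L" "k \<le> m"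
  shows "L (\<lambda>j. if j < k then f j *\<^sub>R y j else y j) = (\<Prod>j<k. f j) *\<^sub>R L y"
  using assms(2)
proof (induction k)
  case 0 then show ?case by simp
next
  case (Suc k)
  have eq: "(\<lambda>j. if j < Suc k then f j *\<^sub>R y j else y j)
      = (\<lambda>j. if j < k then f j *\<^sub>R y j else y j)(k := f k *\<^sub>R y k)"
    by (auto simp: fun_eq_iff)
  have eq2: "(\<lambda>j. if j < k then f j *\<^sub>R y j else y j)(k := y k) = (\<lambda>j. if j < k then f j *\<^sub>R y j else y j)"
    by (auto simp: fun_eq_iff)
  have "L (\<lambda>j. if j < Suc k then f j *\<^sub>R y j else y j) = f k *\<^sub>R L (\<lambda>j. if j < k then f j *\<^sub>R y j else y j)"
    unfolding eq using mlin_slot_scale[OF assms(1), of k _ "f k" "y k"] Suc.prems eq2 by simp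
  also have "\<dots> = (\<Prod>j<Suc k. f j) *\<^sub>R L y" using Suc by (simp add: mult.commute)
  finally show ?case .
qed

lemma mlin_prod_scale:
  assumes "mlinear m L"
  shows "L (\<lambda>j. f j *\<^sub>R y j) = (\<Prod>j<m. f j) *\<^sub>R L y"
proof -
  have "L (\<lambda>j. f j *\<^sub>R y j) = L (\<lambda>j. if j < m then f j *\<^sub>R y j else y j)"
    by (rule mlin_dep[OF assms]) simp
  then show ?thesis using mlin_prod_scale_aux[OF assms order_refl] by simp
qed

lemma hatp_scale:
  assumes "mlinear m L"
  shows "hatp L (c *\<^sub>R z) = c ^ m *\<^sub>R hatp L z"
  using mlin_prod_scale[OF assms, of "\<lambda>_. c" "\<lambda>_. z"] by (simp add: hatp_def)

lemma mlin_zero: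
  assumes "mlinear m L" "j < m" "x j = 0"
  shows "L x = 0"
proof -
  have "x = x(j := 0 *\<^sub>R 0)" using assms by auto
  then have "L x = L (x(j := 0 *\<^sub>R 0))" by simp
  also have "\<dots> = 0" using mlin_slot_scale[OF assms(1,2), of x 0 0] by simp
  finally show ?thesis .
qed

lemma msym_swap:
  assumes "msymmetric m L" "j1 < m" "j2 < m" and False: "j1 \<noteq> j2"
  shows "L (x(j1 := a, j2 := b)) = L (x(j1 := b, j2 := a))"
proof -
  have p: "Transposition.transpose j1 j2 permutes {..<m}" using assms by (intro permutes_swap_id) auto
  have "(x(j1 := b, j2 := a)) \<circ> Transposition.transpose j1 j2 = x(j1 := a, j2 := b)"
    using False by (auto simp: fun_eq_iff Transposition.transpose_def)
  then show ?thesis using assms(1) p unfolding msymmetric_def by metis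
qed



lemma hatp_zero: "mlinear m L \<Longrightarrow> m \<ge> 1 \<Longrightarrow> hatp L 0 = 0"
  unfolding hatp_def by (rule mlin_zero[of m L 0]) auto

lemma hatp_bdd:
  assumes ml: "mlinear m L" and mc: "mcontinuous m L" and m: "m \<ge> 1"
  shows "bdd_above ((\<lambda>x. norm (hatp L x)) ` cball 0 1)"
proof (rule ccontr)
  assume nb: "\<not> ?thesis"
  have "\<forall>p::nat. \<exists>z. z \<in> cball 0 1 \<and> norm (hatp L z) > real (Suc p) ^ (m+1)"
  proof
    fix p::nat
    from nb have "\<not> (\<forall>x\<in>cball 0 1. norm (hatp L x) \<le> real (Suc p) ^ (m+1))"
      by (auto simp: bdd_above_def)
    then show "\<exists>z. z \<in> cball 0 1 \<and> norm (hatp L z) > real (Suc p) ^ (m+1)" by (auto simp: not_le)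
  qed
  then obtain z where z: "\<And>p. z p \<in> cball 0 1" "\<And>p. norm (hatp L (z p)) > real (Suc p) ^ (m+1)"
    by metis
  define w where "w p = (1 / real (Suc p)) *\<^sub>R z p" for p
  have wn: "norm (w p) \<le> 1 / real (Suc p)" for p
    using z(1)[of p] by (simp add: w_def divide_simps)
  have "(\<lambda>p. 1 / real (Suc p)) \<longlonglongrightarrow> 0"
    using LIMSEQ_inverse_real_of_nat by (simp add: inverse_eq_divide)
  then have "w \<longlonglongrightarrow> 0"
    by (rule Lim_null_comparison[rotated]) (use wn in auto)
  then have "(\<lambda>p. L (\<lambda>_. w p)) \<longlonglongrightarrow> L (\<lambda>_. 0)"
    using mc[unfolded mcontinuous_def, rule_format, of "\<lambda>k _. w k" "\<lambda>_. 0"] by simp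
  moreover have "L (\<lambda>_. 0) = 0" using hatp_zero[OF ml m] by (simp add: hatp_def)
  ultimately have "(\<lambda>p. norm (L (\<lambda>_. w p))) \<longlonglongrightarrow> 0"
    using tendsto_norm_zero by fastforce
  then have "eventually (\<lambda>p. norm (L (\<lambda>_. w p)) < 1) sequentially"
    by (rule order_tendstoD) simp
  then obtain p where p: "norm (L (\<lambda>_. w p)) < 1" by (auto dest: eventually_happens)
  have "L (\<lambda>_. w p) = (1 / real (Suc p)) ^ m *\<^sub>R hatp L (z p)"
    using hatp_scale[OF ml] by (simp add: hatp_def w_def)
  then have "norm (L (\<lambda>_. w p)) = norm (hatp L (z p)) / real (Suc p) ^ m"
    by (simp add: power_one_over divide_simps)
  also have "\<dots> > real (Suc p) ^ (m+1) / real (Suc p) ^ m"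
    by (rule divide_strict_right_mono[OF z(2)[of p]]) simp
  also have "real (Suc p) ^ (m+1) / real (Suc p) ^ m = real (Suc p)" by simp
  finally show False using p by simp
qed

lemma hatp_le:
  assumes ml: "mlinear m L" and mc: "mcontinuous m L" and m: "m \<ge> 1"
  shows "norm (hatp L z) \<le> hat_norm L * norm z ^ m"
proof (cases "z = 0")
  case True then show ?thesis using hatp_zero[OF ml m] m by (simp add: zero_power)
next
  case False
  let ?u = "(1 / norm z) *\<^sub>R z"
  have u: "?u \<in> cball 0 1" using False by simp
  have "norm (hatp L ?u) \<le> hat_norm L"
    unfolding hat_norm_def by (rule cSUP_upper[OF u hatp_bdd[OF ml mc m]])
  moreover have "z = norm z *\<^sub>R ?u" using False by simp
  then have "hatp L z = norm z ^ m *\<^sub>R hatp L ?u" using hatp_scale[OF ml] by metis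
  then have "norm (hatp L z) = norm z ^ m * norm (hatp L ?u)" by simp
  ultimately show ?thesis by (metis mult_left_mono mult.commute norm_ge_zero zero_le_power)
qed

lemma hat_norm_pos:
  assumes ml: "mlinear m L" and mc: "mcontinuous m L" and m: "m \<ge> 1"
    and nz: "hatp L \<noteq> (\<lambda>_. 0)"
  shows "hat_norm L > 0"
proof -
  obtain z where z: "hatp L z \<noteq> 0" using nz by auto
  then have "0 < norm (hatp L z)" by simp
  also have "\<dots> \<le> hat_norm L * norm z ^ m" by (rule hatp_le[OF ml mc m])
  finally show ?thesis using zero_le_power[of "norm z" m] by (auto simp: zero_less_mult_iff)
qed


lemma finite_BW:
  fixes f :: "nat \<Rightarrow> 'd \<Rightarrow> real"
  assumes "finite D" "\<And>p d. d \<in> D \<Longrightarrow> \<bar>f p d\<bar> \<le> B"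
  shows "\<exists>r l. strict_mono r \<and> (\<forall>d\<in>D. (\<lambda>p. f (r p) d) \<longlonglongrightarrow> l d)"
  using assms
proof (induction D rule: finite_induct)
  case empty
  show ?case by (rule exI[of _ id]) (auto simp: strict_mono_def)
next
  case (insert d D)
  from insert.IH insert.prems obtain r l where r: "strict_mono r" "\<forall>d\<in>D. (\<lambda>p. f (r p) d) \<longlonglongrightarrow> l d"
    by auto
  have "bounded (range (\<lambda>p. f (r p) d))"
    using insert.prems unfolding bounded_iff by (intro exI[of _ B]) auto
  then obtain l' r' where r': "strict_mono r'" "((\<lambda>p. f (r p) d) \<circ> r') \<longlonglongrightarrow> l'"
    using bounded_imp_convergent_subsequence by blast
  show ?case
  proof (intro exI conjI ballI)
    show "strict_mono (r \<circ> r')" using r(1) r'(1) by (simp add: strict_mono_def)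
    fix d' assume d': "d' \<in> insert d D"
    show "(\<lambda>p. f ((r \<circ> r') p) d') \<longlonglongrightarrow> (l(d := l')) d'"
    proof (cases "d' = d")
      case True then show ?thesis using r'(2) by (simp add: comp_def)
    next
      case False
      then have "d' \<in> D" using d' by auto
      then have "((\<lambda>p. f (r p) d') \<circ> r') \<longlonglongrightarrow> l d'"
        using r(2) r'(1) LIMSEQ_subseq_LIMSEQ by blast
      then show ?thesis using False by (simp add: comp_def)
    qed
  qed
qed
definition Box :: "nat \<Rightarrow> nat \<Rightarrow> (nat \<Rightarrow> nat \<Rightarrow> real) set" where
  "Box m n = {u. (\<forall>j i. \<bar>u j i\<bar> \<le> 1) \<and> (\<forall>j i. \<not>(j<m \<and> i<n) \<longrightarrow> u j i = 0)}"

lemma subseq_conv: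
  fixes s :: "nat \<Rightarrow> nat \<Rightarrow> nat \<Rightarrow> real"
  assumes sub: "C \<subseteq> Box m n" and s: "\<forall>p. s p \<in> C"
   and closed: "\<forall>s u. (\<forall>p. s p \<in> C) \<longrightarrow> (\<forall>j<m. \<forall>i<n. (\<lambda>p. s p j i) \<longlonglongrightarrow> u j i)
        \<longrightarrow> (\<forall>j i. \<not>(j<m \<and> i<n) \<longrightarrow> u j i = 0) \<longrightarrow> u \<in> C"
  shows "\<exists>r u. strict_mono r \<and> u \<in> C \<and> (\<forall>j<m. \<forall>i<n. (\<lambda>p. s (r p) j i) \<longlonglongrightarrow> u j i)"
proof -
  have "\<exists>r l. strict_mono r \<and> (\<forall>d\<in>{..<m}\<times>{..<n}. (\<lambda>p. s (r p) (fst d) (snd d)) \<longlonglongrightarrow> l d)"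
  proof -
    have bnd: "\<bar>s p (fst d) (snd d)\<bar> \<le> 1" for p and d :: "nat \<times> nat"
    proof -
      have "s p \<in> Box m n" using s sub by blast
      then show "\<bar>s p (fst d) (snd d)\<bar> \<le> 1" unfolding Box_def by blast
    qed
    show ?thesis using finite_BW[of "{..<m}\<times>{..<n}" "\<lambda>p d. s p (fst d) (snd d)" 1] bnd by blast
  qed
  then obtain r l where r: "strict_mono r" "\<forall>d\<in>{..<m}\<times>{..<n}. (\<lambda>p. s (r p) (fst d) (snd d)) \<longlonglongrightarrow> l d"
    by blast
  define u where "u j i = (if j < m \<and> i < n then l (j,i) else 0)" for j i
  have cv: "\<forall>j<m. \<forall>i<n. (\<lambda>p. s (r p) j i) \<longlonglongrightarrow> u j i"
  proof (intro allI impI)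
    fix j i assume "j < m" "i < n"
    then show "(\<lambda>p. s (r p) j i) \<longlonglongrightarrow> u j i" using r(2) by (force simp: u_def)
  qed
  have z: "\<forall>j i. \<not>(j<m \<and> i<n) \<longrightarrow> u j i = 0" by (simp add: u_def)
  have sr: "\<forall>p. (s \<circ> r) p \<in> C" using s by simp
  have cv': "\<forall>j<m. \<forall>i<n. (\<lambda>p. (s \<circ> r) p j i) \<longlonglongrightarrow> u j i" using cv by (simp add: comp_def)
  have "u \<in> C" using closed sr cv' z by blast
  then show ?thesis using r(1) cv by blast
qed

lemma attains_max:
  fixes F :: "(nat \<Rightarrow> nat \<Rightarrow> real) \<Rightarrow> real"
  assumes sub: "C \<subseteq> Box m n" and ne: "C \<noteq> {}"
   and closed: "\<forall>s u. (\<forall>p. s p \<in> C) \<longrightarrow> (\<forall>j<m. \<forall>i<n. (\<lambda>p. s p j i) \<longlonglongrightarrow> u j i)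
        \<longrightarrow> (\<forall>j i. \<not>(j<m \<and> i<n) \<longrightarrow> u j i = 0) \<longrightarrow> u \<in> C"
   and cont: "\<forall>s u. (\<forall>p. s p \<in> C) \<longrightarrow> u \<in> C \<longrightarrow> (\<forall>j<m. \<forall>i<n. (\<lambda>p. s p j i) \<longlonglongrightarrow> u j i)
        \<longrightarrow> (\<lambda>p. F (s p)) \<longlonglongrightarrow> F u"
  shows "\<exists>u\<in>C. \<forall>v\<in>C. F v \<le> F u"
proof -
  have bdd: "bdd_above (F ` C)"
  proof (rule ccontr)
    assume nb: "\<not> bdd_above (F ` C)"
    have "\<forall>p::nat. \<exists>v. v \<in> C \<and> F v > real p"
    proof
      fix p :: nat
      from nb have "\<not> (\<forall>v\<in>C. F v \<le> real p)" unfolding bdd_above_def by blast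
      then show "\<exists>v. v \<in> C \<and> F v > real p" by (meson not_le)
    qed
    then have "\<exists>s. \<forall>p. s p \<in> C \<and> F (s p) > real p" by (rule choice)
    then obtain s where s: "\<And>p. s p \<in> C" "\<And>p. F (s p) > real p" by blast
    have sC: "\<forall>p. s p \<in> C" using s(1) by blast
    from subseq_conv[OF sub sC closed] obtain r u where ru: "strict_mono r" "u \<in> C" "\<forall>j<m. \<forall>i<n. (\<lambda>p. s (r p) j i) \<longlonglongrightarrow> u j i"
      by blast
    have sr: "\<forall>p. (s \<circ> r) p \<in> C" using s(1) by simp
    have "(\<lambda>p. F ((s \<circ> r) p)) \<longlonglongrightarrow> F u"
    proof -
      have cv': "\<forall>j<m. \<forall>i<n. (\<lambda>p. (s \<circ> r) p j i) \<longlonglongrightarrow> u j i" using ru(3) by (simp add: comp_def)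
      show ?thesis using cont sr ru(2) cv' by blast
    qed
    then have "eventually (\<lambda>p. F (s (r p)) < F u + 1) sequentially"
      by (intro order_tendstoD) auto
    then obtain N where N: "\<And>p. p \<ge> N \<Longrightarrow> F (s (r p)) < F u + 1"
      unfolding eventually_sequentially by blast
    obtain M :: nat where M: "F u + 1 \<le> real M" using real_arch_simple by blast
    define p where "p = max N M"
    have p: "F (s (r p)) < F u + 1" "F u + 1 \<le> real p" using N[of p] M by (auto simp: p_def)
    have "real p \<le> real (r p)" using seq_suble[OF ru(1)] by simp
    then show False using p s(2)[of "r p"] by linarith
  qed
  define S where "S = Sup (F ` C)"
  have "\<forall>p::nat. \<exists>v. v \<in> C \<and> F v > S - 1 / real (Suc p)"
  proof
    fix p :: nat
    have "S - 1 / real (Suc p) < S" by simp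
    then have "\<exists>y\<in>F ` C. S - 1 / real (Suc p) < y"
      unfolding S_def using ne by (intro less_cSupD) auto
    then show "\<exists>v. v \<in> C \<and> F v > S - 1 / real (Suc p)" by blast
  qed
  then have "\<exists>s. \<forall>p. s p \<in> C \<and> F (s p) > S - 1 / real (Suc p)" by (rule choice)
  then obtain s where s: "\<And>p. s p \<in> C" "\<And>p. F (s p) > S - 1 / real (Suc p)" by blast
  have sC: "\<forall>p. s p \<in> C" using s(1) by blast
  from subseq_conv[OF sub sC closed] obtain r u where ru: "strict_mono r" "u \<in> C" "\<forall>j<m. \<forall>i<n. (\<lambda>p. s (r p) j i) \<longlonglongrightarrow> u j i"
    by blast
  have sr: "\<forall>p. (s \<circ> r) p \<in> C" using s(1) by simp
  have lim: "(\<lambda>p. F ((s \<circ> r) p)) \<longlonglongrightarrow> F u"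
  proof -
    have cv': "\<forall>j<m. \<forall>i<n. (\<lambda>p. (s \<circ> r) p j i) \<longlonglongrightarrow> u j i" using ru(3) by (simp add: comp_def)
    show ?thesis using cont sr ru(2) cv' by blast
  qed
  have lim0: "(\<lambda>p. 1 / real (Suc p)) \<longlonglongrightarrow> 0"
    using LIMSEQ_Suc[OF lim_inverse_n'] by (simp add: inverse_eq_divide)
  have lim2: "(\<lambda>p. S - 1 / real (Suc p)) \<longlonglongrightarrow> S - 0"
    by (intro tendsto_diff tendsto_const lim0)
  have le: "S - 1 / real (Suc p) \<le> F ((s \<circ> r) p)" for p
  proof -
    have "real (Suc p) \<le> real (Suc (r p))" using seq_suble[OF ru(1), of p] by simp
    then have "1 / real (Suc (r p)) \<le> 1 / real (Suc p)" by (simp add: frac_le)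
    then show ?thesis using s(2)[of "r p"] by simp
  qed
  have "S \<le> F u" using LIMSEQ_le[OF lim2 lim] le by simp
  moreover have "\<forall>v\<in>C. F v \<le> S" unfolding S_def using bdd by (auto intro: cSup_upper)
  ultimately show ?thesis using ru(2) by force
qed



definition vec_of :: "nat \<Rightarrow> (nat \<Rightarrow> 'a::real_normed_vector) \<Rightarrow> (nat \<Rightarrow> real) \<Rightarrow> 'a" where
  "vec_of n x t = (\<Sum>i<n. t i *\<^sub>R x i)"

definition sq :: "nat \<Rightarrow> (nat \<Rightarrow> real) \<Rightarrow> real" where
  "sq n t = (\<Sum>i<n. (t i)^2)"

definition ip :: "nat \<Rightarrow> (nat \<Rightarrow> real) \<Rightarrow> (nat \<Rightarrow> real) \<Rightarrow> real" where
  "ip n t s = (\<Sum>i<n. t i * s i)"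

lemma vec_of_add: "vec_of n x (\<lambda>i. t i + s i) = vec_of n x t + vec_of n x s"
  by (simp add: vec_of_def scaleR_add_left sum.distrib)

lemma vec_of_diff: "vec_of n x (\<lambda>i. t i - s i) = vec_of n x t - vec_of n x s"
  by (simp add: vec_of_def scaleR_diff_left sum_subtractf)

lemma vec_of_scale: "vec_of n x (\<lambda>i. c * t i) = c *\<^sub>R vec_of n x t"
  by (simp add: vec_of_def scaleR_sum_right)

lemma vec_of_cong: "(\<And>i. i < n \<Longrightarrow> t i = s i) \<Longrightarrow> vec_of n x t = vec_of n x s"
  by (simp add: vec_of_def)

lemma sq_nonneg: "sq n t \<ge> 0"
  by (simp add: sq_def sum_nonneg)

lemma sq_zero_iff: "sq n t = 0 \<longleftrightarrow> (\<forall>i<n. t i = 0)"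
  unfolding sq_def by (subst sum_nonneg_eq_0_iff) auto

lemma sq_comp_le: "i < n \<Longrightarrow> (t i)^2 \<le> sq n t"
  unfolding sq_def by (rule member_le_sum) auto

lemma sq_scale: "sq n (\<lambda>i. c * t i) = c^2 * sq n t"
  by (simp add: sq_def power_mult_distrib sum_distrib_left)

lemma ip_zero: "(\<forall>i<n. t i = 0) \<Longrightarrow> ip n s t = 0"
  by (simp add: ip_def)

lemma polar2:
  assumes ml: "mlinear m L" and ms: "msymmetric m L" and j: "j1 < m" "j2 < m" "j1 \<noteq> j2"
  shows "4 *\<^sub>R L (Y(j1:=P, j2:=Q)) = L (Y(j1:=P+Q, j2:=P+Q)) - L (Y(j1:=P-Q, j2:=P-Q))"
proof -
  define \<beta> where "\<beta> a b = L (Y(j1:=a, j2:=b))" for a b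
  have tw: "Y(j1:=a, j2:=b) = (Y(j2:=b))(j1:=a)" for a b using j(3) by (simp add: fun_upd_twist)
  have r_add: "\<beta> a (b + c) = \<beta> a b + \<beta> a c" for a b c
    unfolding \<beta>_def using mlin_slot_add[OF ml j(2), of "Y(j1:=a)"] by simp
  have r_diff: "\<beta> a (b - c) = \<beta> a b - \<beta> a c" for a b c
    unfolding \<beta>_def using mlin_slot_diff[OF ml j(2), of "Y(j1:=a)"] by simp
  have l_add: "\<beta> (a + b) c = \<beta> a c + \<beta> b c" for a b c
    unfolding \<beta>_def tw using mlin_slot_add[OF ml j(1), of "Y(j2:=c)"] by simp
  have l_diff: "\<beta> (a - b) c = \<beta> a c - \<beta> b c" for a b c
    unfolding \<beta>_def tw using mlin_slot_diff[OF ml j(1), of "Y(j2:=c)"] by simp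
  have sym: "\<beta> a b = \<beta> b a" for a b
    unfolding \<beta>_def using msym_swap[OF ms j] by simp
  have "\<beta> (P+Q) (P+Q) - \<beta> (P-Q) (P-Q) = 2 *\<^sub>R \<beta> P Q + 2 *\<^sub>R \<beta> Q P"
    by (simp add: r_add r_diff l_add l_diff scaleR_2 algebra_simps)
  also have "\<dots> = 4 *\<^sub>R \<beta> P Q" using sym[of Q P] by (simp add: scaleR_left_distrib[symmetric])
  finally show ?thesis unfolding \<beta>_def by simp
qed

lemma scale2:
  assumes ml: "mlinear m L" and j: "j1 < m" "j2 < m" "j1 \<noteq> j2"
  shows "L (Y(j1 := c *\<^sub>R A, j2 := c *\<^sub>R A)) = c^2 *\<^sub>R L (Y(j1:=A, j2:=A))"
proof -
  have tw: "Y(j1:=a, j2:=b) = (Y(j2:=b))(j1:=a)" for a b using j(3) by (simp add: fun_upd_twist)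
  have "L (Y(j1 := c *\<^sub>R A, j2 := c *\<^sub>R A)) = c *\<^sub>R L (Y(j1 := c *\<^sub>R A, j2 := A))"
    using mlin_slot_scale[OF ml j(2), of "Y(j1 := c *\<^sub>R A)"] by simp
  also have "L (Y(j1 := c *\<^sub>R A, j2 := A)) = c *\<^sub>R L (Y(j1 := A, j2 := A))"
    unfolding tw using mlin_slot_scale[OF ml j(1), of "Y(j2 := A)"] by simp
  finally show ?thesis by (simp only: power2_eq_square scaleR_scaleR)
qed



lemma sum_upd:
  fixes g :: "'a \<Rightarrow> 'b::ab_group_add"
  assumes "finite A" "j \<in> A"
  shows "(\<Sum>k\<in>A. (g(j:=c)) k) = (\<Sum>k\<in>A. g k) - g j + c"
proof -
  have "(\<Sum>k\<in>A. (g(j:=c)) k) = (g(j:=c)) j + (\<Sum>k\<in>A-{j}. (g(j:=c)) k)"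
    using assms by (rule sum.remove)
  also have "(\<Sum>k\<in>A-{j}. (g(j:=c)) k) = (\<Sum>k\<in>A-{j}. g k)" by (rule sum.cong) auto
  also have "(\<Sum>k\<in>A. g k) = g j + (\<Sum>k\<in>A-{j}. g k)" using assms by (rule sum.remove)
  then have "(\<Sum>k\<in>A-{j}. g k) = (\<Sum>k\<in>A. g k) - g j" by simp
  finally show ?thesis by simp
qed

lemma sum_upd_col:
  fixes w :: "nat \<Rightarrow> nat \<Rightarrow> real"
  assumes "j0 < m"
  shows "(\<Sum>j<m. (w(j0:=f)) j i) = (\<Sum>j<m. w j i) - w j0 i + f i"
proof -
  have "(\<Sum>j<m. (w(j0:=f)) j i) = (\<Sum>j<m. ((\<lambda>j. w j i)(j0 := f i)) j)"
    by (rule sum.cong) auto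
  also have "\<dots> = (\<Sum>j<m. w j i) - w j0 i + f i" using sum_upd[of "{..<m}" j0 "\<lambda>j. w j i" "f i"] assms by simp
  finally show ?thesis .
qed

lemma vec_of_neg: "vec_of n x (\<lambda>i. - t i) = - vec_of n x t"
  by (simp add: vec_of_def sum_negf)

lemma sq_lin: "sq n (\<lambda>i. a i + c * b i) = sq n a + 2 * c * ip n a b + c^2 * sq n b"
proof -
  have "(a i + c * b i)^2 = (a i)^2 + 2 * c * (a i * b i) + c^2 * (b i)^2" for i
    by (simp add: power2_eq_square algebra_simps)
  then show ?thesis unfolding sq_def ip_def
    by (simp add: sum.distrib sum_distrib_left)
qed

lemma banach:
  fixes L :: "(nat \<Rightarrow> 'a::real_normed_vector) \<Rightarrow> 'b::real_normed_vector"
  assumes ml: "mlinear m L" and ms: "msymmetric m L" and mc: "mcontinuous m L"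
    and m: "m \<ge> 1" and n: "n \<ge> 1"
    and B: "\<forall>t. sq n t = 1 \<longrightarrow> norm (hatp L (vec_of n x t)) \<le> B"
    and u: "\<forall>j<m. sq n (u j) = 1"
  shows "norm (L (\<lambda>j. vec_of n x (u j))) \<le> B"
proof -
  define U where "U = {v \<in> Box m n. \<forall>j<m. sq n (v j) = 1}"
  define G where "G v = norm (L (\<lambda>j. vec_of n x (v j)))" for v
  define \<Psi> where "\<Psi> v = sq n (\<lambda>i. \<Sum>j<m. v j i)" for v :: "nat \<Rightarrow> nat \<Rightarrow> real"
  have Gcont: "(\<lambda>p. G (s p)) \<longlonglongrightarrow> G v" if cv: "\<forall>j<m. \<forall>i<n. (\<lambda>p. s p j i) \<longlonglongrightarrow> v j i" for s v
  proof -
    have "\<forall>j<m. (\<lambda>p. vec_of n x (s p j)) \<longlonglongrightarrow> vec_of n x (v j)"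
      unfolding vec_of_def using cv by (auto intro!: tendsto_sum tendsto_scaleR)
    then have "(\<lambda>p. L (\<lambda>j. vec_of n x (s p j))) \<longlonglongrightarrow> L (\<lambda>j. vec_of n x (v j))"
      using mc[unfolded mcontinuous_def, rule_format, of "\<lambda>p j. vec_of n x (s p j)" "\<lambda>j. vec_of n x (v j)"]
      by simp
    then show ?thesis unfolding G_def by (rule tendsto_norm)
  qed
  have sqcont: "(\<lambda>p. sq n (f p)) \<longlonglongrightarrow> sq n g" if "\<forall>i<n. (\<lambda>p. f p i) \<longlonglongrightarrow> g i" for f g
    unfolding sq_def using that by (auto intro!: tendsto_sum tendsto_power)
  have Uclosed: "\<forall>s v. (\<forall>p. s p \<in> U) \<longrightarrow> (\<forall>j<m. \<forall>i<n. (\<lambda>p. s p j i) \<longlonglongrightarrow> v j i)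
        \<longrightarrow> (\<forall>j i. \<not>(j<m \<and> i<n) \<longrightarrow> v j i = 0) \<longrightarrow> v \<in> U"
  proof (intro allI impI)
    fix s :: "nat \<Rightarrow> nat \<Rightarrow> nat \<Rightarrow> real" and v assume sU: "\<forall>p. s p \<in> U" and cv: "\<forall>j<m. \<forall>i<n. (\<lambda>p. s p j i) \<longlonglongrightarrow> v j i"
      and z: "\<forall>j i. \<not>(j<m \<and> i<n) \<longrightarrow> v j i = 0"
    have ab: "\<bar>v j i\<bar> \<le> 1" for j i
    proof (cases "j < m \<and> i < n")
      case True
      have "(\<lambda>p. s p j i) \<longlonglongrightarrow> v j i" using cv True by blast
      then have lim: "(\<lambda>p. \<bar>s p j i\<bar>) \<longlonglongrightarrow> \<bar>v j i\<bar>" by (rule tendsto_rabs)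
      have bnd: "\<bar>s p j i\<bar> \<le> 1" for p
      proof -
        have "s p \<in> Box m n" using sU unfolding U_def by blast
        then show ?thesis unfolding Box_def by blast
      qed
      show ?thesis by (rule LIMSEQ_le_const2[OF lim]) (use bnd in blast)
    next
      case False then show ?thesis using z by simp
    qed
    have sq1: "sq n (v j) = 1" if j: "j < m" for j
    proof -
      have "\<forall>i<n. (\<lambda>p. s p j i) \<longlonglongrightarrow> v j i" using cv j by blast
      then have lim: "(\<lambda>p. sq n (s p j)) \<longlonglongrightarrow> sq n (v j)" by (rule sqcont)
      have "sq n (s p j) = 1" for p using sU j unfolding U_def by blast
      then have "(\<lambda>p. sq n (s p j)) = (\<lambda>p. 1)" by simp
      then have "(\<lambda>p. sq n (s p j)) \<longlonglongrightarrow> 1" by simp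
      then show ?thesis using LIMSEQ_unique[OF lim] by simp
    qed
    show "v \<in> U" unfolding U_def Box_def using ab z sq1 by blast
  qed
  have sub: "U \<subseteq> Box m n" by (auto simp: U_def)
  define e0 :: "nat \<Rightarrow> nat \<Rightarrow> real" where "e0 = (\<lambda>j i. if j < m \<and> i = 0 then 1 else 0)"
  have e0U: "e0 \<in> U"
  proof -
    have "sq n (e0 j) = 1" if "j < m" for j
    proof -
      have "sq n (e0 j) = (\<Sum>i<n. (if i = 0 then 1 else 0))"
        unfolding sq_def e0_def using that by (intro sum.cong) auto
      also have "\<dots> = 1" using n by simp
      finally show ?thesis .
    qed
    then show ?thesis unfolding U_def Box_def e0_def using n by auto
  qed
  have Gcont': "\<forall>s v. (\<forall>p. s p \<in> U) \<longrightarrow> v \<in> U \<longrightarrow> (\<forall>j<m. \<forall>i<n. (\<lambda>p. s p j i) \<longlonglongrightarrow> v j i)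
        \<longrightarrow> (\<lambda>p. G (s p)) \<longlonglongrightarrow> G v"
  proof (intro allI impI)
    fix s :: "nat \<Rightarrow> nat \<Rightarrow> nat \<Rightarrow> real" and v assume "\<forall>j<m. \<forall>i<n. (\<lambda>p. s p j i) \<longlonglongrightarrow> v j i"
    then show "(\<lambda>p. G (s p)) \<longlonglongrightarrow> G v" by (rule Gcont)
  qed
  have Une: "U \<noteq> {}" using e0U by blast
  from attains_max[OF sub Une Uclosed Gcont'] obtain u0 where u0: "u0 \<in> U" "\<forall>v\<in>U. G v \<le> G u0"
    by blast
  define S where "S = G u0"
  define K where "K = {v \<in> U. G v = S}"
  have subK: "K \<subseteq> Box m n" using sub unfolding K_def by blast
  have Kclosed: "\<forall>s v. (\<forall>p. s p \<in> K) \<longrightarrow> (\<forall>j<m. \<forall>i<n. (\<lambda>p. s p j i) \<longlonglongrightarrow> v j i)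
        \<longrightarrow> (\<forall>j i. \<not>(j<m \<and> i<n) \<longrightarrow> v j i = 0) \<longrightarrow> v \<in> K"
  proof (intro allI impI)
    fix s :: "nat \<Rightarrow> nat \<Rightarrow> nat \<Rightarrow> real" and v assume sK: "\<forall>p. s p \<in> K" and cv: "\<forall>j<m. \<forall>i<n. (\<lambda>p. s p j i) \<longlonglongrightarrow> v j i"
      and z: "\<forall>j i. \<not>(j<m \<and> i<n) \<longrightarrow> v j i = 0"
    have sU': "\<forall>p. s p \<in> U" using sK unfolding K_def by blast
    have vU: "v \<in> U" by (rule mp[OF mp[OF mp[OF spec[OF spec[OF Uclosed, of s], of v] sU'] cv] z])
    have lim: "(\<lambda>p. G (s p)) \<longlonglongrightarrow> G v" using cv by (rule Gcont)
    have "G (s p) = S" for p using sK unfolding K_def by blast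
    then have "(\<lambda>p. G (s p)) = (\<lambda>p. S)" by simp
    then have "(\<lambda>p. G (s p)) \<longlonglongrightarrow> S" by simp
    then have "G v = S" using LIMSEQ_unique[OF lim] by simp
    then show "v \<in> K" using vU unfolding K_def by blast
  qed
  have Psicont: "\<forall>s v. (\<forall>p. s p \<in> K) \<longrightarrow> v \<in> K \<longrightarrow> (\<forall>j<m. \<forall>i<n. (\<lambda>p. s p j i) \<longlonglongrightarrow> v j i)
        \<longrightarrow> (\<lambda>p. \<Psi> (s p)) \<longlonglongrightarrow> \<Psi> v"
  proof (intro allI impI)
    fix s :: "nat \<Rightarrow> nat \<Rightarrow> nat \<Rightarrow> real" and v assume cv: "\<forall>j<m. \<forall>i<n. (\<lambda>p. s p j i) \<longlonglongrightarrow> v j i"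
    have "\<forall>i<n. (\<lambda>p. \<Sum>j<m. s p j i) \<longlonglongrightarrow> (\<Sum>j<m. v j i)"
    proof (intro allI impI)
      fix i assume i: "i < n"
      show "(\<lambda>p. \<Sum>j<m. s p j i) \<longlonglongrightarrow> (\<Sum>j<m. v j i)"
      proof (rule tendsto_sum)
        fix j assume "j \<in> {..<m}"
        then show "(\<lambda>p. s p j i) \<longlonglongrightarrow> v j i" using cv i by blast
      qed
    qed
    then show "(\<lambda>p. \<Psi> (s p)) \<longlonglongrightarrow> \<Psi> v" unfolding \<Psi>_def by (rule sqcont)
  qed
  have u0K: "u0 \<in> K" using u0 by (auto simp: K_def S_def)
  have Kne: "K \<noteq> {}" using u0K by blast
  from attains_max[OF subK Kne Kclosed Psicont] obtain w where w: "w \<in> K" "\<forall>v\<in>K. \<Psi> v \<le> \<Psi> w"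
    by blast
  have wU: "w \<in> U" and GwS: "G w = S" using w(1) unfolding K_def by auto
  have wz: "\<forall>j i. \<not>(j<m \<and> i<n) \<longrightarrow> w j i = 0" using wU unfolding U_def Box_def by blast
  have wsq: "\<forall>j<m. sq n (w j) = 1" using wU unfolding U_def by blast
  have unit_upd: "v(j := t) \<in> U" if v: "v \<in> U" and j: "j < m" and t: "sq n t = 1" and tz: "\<forall>i\<ge>n. t i = 0" for v j t
  proof -
    have vb: "\<forall>j i. \<bar>v j i\<bar> \<le> 1" "\<forall>j i. \<not>(j<m \<and> i<n) \<longrightarrow> v j i = 0" "\<forall>j<m. sq n (v j) = 1"
      using v unfolding U_def Box_def by auto
    have tb: "\<bar>t i\<bar> \<le> 1" for i
    proof (cases "i < n")
      case True
      then have "(t i)^2 \<le> 1" using sq_comp_le[of i n t] t by simp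
      then show ?thesis by (simp add: abs_square_le_1)
    next
      case False then show ?thesis using tz by simp
    qed
    show ?thesis unfolding U_def Box_def using vb tb tz t j by auto
  qed
  define Y where "Y = (\<lambda>j. vec_of n x (w j))"
  define \<sigma> where "\<sigma> i = (\<Sum>j<m. w j i)" for i
  have Psiw: "\<Psi> w = sq n \<sigma>" unfolding \<Psi>_def \<sigma>_def by simp
  have flip: "ip n \<sigma> (w j0) \<ge> 1" if j0: "j0 < m" for j0
  proof -
    define w' where "w' = w(j0 := (\<lambda>i. - w j0 i))"
    have "sq n (\<lambda>i. - w j0 i) = 1" using wsq j0 by (simp add: sq_def)
    moreover have "\<forall>i\<ge>n. - w j0 i = 0" using wz by simp
    ultimately have w'U: "w' \<in> U" unfolding w'_def using unit_upd[OF wU j0] by blast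
    have "(\<lambda>j. vec_of n x (w' j)) = Y(j0 := - Y j0)"
      by (auto simp: fun_eq_iff w'_def Y_def vec_of_neg)
    then have "L (\<lambda>j. vec_of n x (w' j)) = - L (Y(j0 := Y j0))"
      using mlin_slot_minus[OF ml j0, of Y "Y j0"] by simp
    then have "L (\<lambda>j. vec_of n x (w' j)) = - L Y" by simp
    then have "G w' = G w" by (simp add: G_def Y_def)
    then have "w' \<in> K" using w'U GwS unfolding K_def by blast
    then have le: "\<Psi> w' \<le> \<Psi> w" using w(2) by blast
    have col: "(\<Sum>j<m. w' j i) = \<sigma> i + (-2) * w j0 i" for i
      unfolding w'_def \<sigma>_def using sum_upd_col[OF j0, of w "\<lambda>i. - w j0 i" i] by simp
    have "\<Psi> w' = sq n (\<lambda>i. \<sigma> i + (-2) * w j0 i)"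
      unfolding \<Psi>_def col by simp
    also have "\<dots> = sq n \<sigma> - 4 * ip n \<sigma> (w j0) + 4"
      using sq_lin[of n \<sigma> "-2" "w j0"] wsq j0 by simp
    finally show ?thesis using le Psiw by simp
  qed
  have merge: False if j1: "j1 < m" "j1 \<noteq> 0" and i0: "i0 < n" "w j1 i0 \<noteq> w 0 i0" for j1 i0
  proof -
    have m0: "0 < m" using m by simp
    define p where "p = w j1"
    define q where "q = w 0"
    define sv where "sv i = p i + q i" for i
    define d where "d i = p i - q i" for i
    have sqp: "sq n p = 1" "sq n q = 1" using wsq j1 m0 by (auto simp: p_def q_def)
    have "(sv i)^2 + (d i)^2 = 2 * (p i)^2 + 2 * (q i)^2" for i
      by (simp add: sv_def d_def power2_eq_square algebra_simps)
    then have "sq n sv + sq n d = 2 * sq n p + 2 * sq n q"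
      unfolding sq_def by (simp add: sum.distrib[symmetric] sum_distrib_left)
    then have sd4: "sq n sv + sq n d = 4" using sqp by simp
    have "d i0 \<noteq> 0" using i0 by (simp add: d_def p_def q_def)
    then have "sq n d \<noteq> 0" using sq_zero_iff[of n d] i0 by blast
    then have dpos: "sq n d > 0" using sq_nonneg[of n d] by simp
    have "ip n \<sigma> sv = ip n \<sigma> p + ip n \<sigma> q"
      unfolding ip_def sv_def by (simp add: distrib_left sum.distrib)
    then have ips: "ip n \<sigma> sv \<ge> 2" using flip[OF j1(1)] flip[OF m0] by (simp add: p_def q_def)
    have spos: "sq n sv > 0"
    proof (rule ccontr)
      assume "\<not> sq n sv > 0"
      then have "sq n sv = 0" using sq_nonneg[of n sv] by simp
      then have "ip n \<sigma> sv = 0" using sq_zero_iff[of n sv] ip_zero by blast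
      then show False using ips by simp
    qed
    define \<nu> where "\<nu> = sqrt (sq n sv)"
    define \<delta> where "\<delta> = sqrt (sq n d)"
    have nu: "\<nu> > 0" "\<nu>^2 = sq n sv" using spos by (auto simp: \<nu>_def)
    have de: "\<delta> > 0" "\<delta>^2 = sq n d" using dpos by (auto simp: \<delta>_def)
    define a where "a i = (1 / \<nu>) * sv i" for i
    define e where "e i = (1 / \<delta>) * d i" for i
    have "sq n a = (1/\<nu>)^2 * sq n sv" unfolding a_def by (rule sq_scale)
    then have sqa: "sq n a = 1" using nu spos by (simp add: power_one_over)
    have "sq n e = (1/\<delta>)^2 * sq n d" unfolding e_def by (rule sq_scale)
    then have sqe: "sq n e = 1" using de dpos by (simp add: power_one_over)
    have az: "\<forall>i\<ge>n. a i = 0" using wz j1 m0 by (simp add: a_def sv_def p_def q_def)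
    have ez: "\<forall>i\<ge>n. e i = 0" using wz j1 m0 by (simp add: e_def d_def p_def q_def)
    define wa where "wa = w(j1 := a, 0 := a)"
    define we where "we = w(j1 := e, 0 := e)"
    have waU: "wa \<in> U" unfolding wa_def by (intro unit_upd[OF unit_upd[OF wU j1(1) sqa az] m0 sqa az])
    have weU: "we \<in> U" unfolding we_def by (intro unit_upd[OF unit_upd[OF wU j1(1) sqe ez] m0 sqe ez])
    have YY: "Y = Y(j1 := vec_of n x p, 0 := vec_of n x q)"
      by (auto simp: fun_eq_iff Y_def p_def q_def)
    have PQ1: "vec_of n x p + vec_of n x q = \<nu> *\<^sub>R vec_of n x a"
    proof -
      have "vec_of n x p + vec_of n x q = vec_of n x sv" unfolding sv_def by (rule vec_of_add[symmetric])
      also have "sv = (\<lambda>i. \<nu> * a i)" using nu by (auto simp: fun_eq_iff a_def)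
      finally show ?thesis by (simp add: vec_of_scale)
    qed
    have PQ2: "vec_of n x p - vec_of n x q = \<delta> *\<^sub>R vec_of n x e"
    proof -
      have "vec_of n x p - vec_of n x q = vec_of n x d" unfolding d_def by (rule vec_of_diff[symmetric])
      also have "d = (\<lambda>i. \<delta> * e i)" using de by (auto simp: fun_eq_iff e_def)
      finally show ?thesis by (simp add: vec_of_scale)
    qed
    have Ya: "Y(j1 := vec_of n x a, 0 := vec_of n x a) = (\<lambda>j. vec_of n x (wa j))"
      by (auto simp: fun_eq_iff Y_def wa_def)
    have Ye: "Y(j1 := vec_of n x e, 0 := vec_of n x e) = (\<lambda>j. vec_of n x (we j))"
      by (auto simp: fun_eq_iff Y_def we_def)
    have "4 *\<^sub>R L Y = L (Y(j1 := \<nu> *\<^sub>R vec_of n x a, 0 := \<nu> *\<^sub>R vec_of n x a))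
        - L (Y(j1 := \<delta> *\<^sub>R vec_of n x e, 0 := \<delta> *\<^sub>R vec_of n x e))"
      using polar2[OF ml ms j1(1) m0 j1(2), of Y "vec_of n x p" "vec_of n x q"] YY PQ1 PQ2 by simp
    also have "\<dots> = \<nu>^2 *\<^sub>R L (\<lambda>j. vec_of n x (wa j)) - \<delta>^2 *\<^sub>R L (\<lambda>j. vec_of n x (we j))"
      using scale2[OF ml j1(1) m0 j1(2)] Ya Ye by simp
    finally have eq4: "4 *\<^sub>R L Y = \<nu>^2 *\<^sub>R L (\<lambda>j. vec_of n x (wa j)) - \<delta>^2 *\<^sub>R L (\<lambda>j. vec_of n x (we j))" .
    have "4 * G w = norm (4 *\<^sub>R L Y)" by (simp add: G_def Y_def)
    also have "\<dots> \<le> norm (\<nu>^2 *\<^sub>R L (\<lambda>j. vec_of n x (wa j))) + norm (\<delta>^2 *\<^sub>R L (\<lambda>j. vec_of n x (we j)))"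
      unfolding eq4 by (rule norm_triangle_ineq4)
    also have "\<dots> = \<nu>^2 * G wa + \<delta>^2 * G we" by (simp add: G_def)
    finally have i4: "4 * G w \<le> \<nu>^2 * G wa + \<delta>^2 * G we" .
    have Gwe: "G we \<le> S" using u0(2) weU by (simp add: S_def)
    have Gwa: "G wa \<le> S" using u0(2) waU by (simp add: S_def)
    have "\<delta>^2 * G we \<le> \<delta>^2 * S" using Gwe by (simp add: mult_left_mono)
    then have "4 * S \<le> \<nu>^2 * G wa + \<delta>^2 * S" using i4 GwS by simp
    moreover have "4 * S = \<nu>^2 * S + \<delta>^2 * S"
      using sd4 nu(2) de(2) by (metis distrib_right)
    ultimately have "\<nu>^2 * S \<le> \<nu>^2 * G wa" by linarith
    then have "S \<le> G wa" using nu(1) by simp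
    then have "wa \<in> K" using Gwa waU unfolding K_def by simp
    then have le: "\<Psi> wa \<le> \<Psi> w" using w(2) by blast
    define \<mu> where "\<mu> = 2 / \<nu> - 1"
    have "sq n sv < 4" using sd4 dpos by simp
    then have "\<nu> < 2" unfolding \<nu>_def using real_sqrt_less_iff[of "sq n sv" 4] by (simp add: real_sqrt_four)
    then have mupos: "\<mu> > 0" using nu(1) by (simp add: \<mu>_def)
    have colsum: "(\<Sum>j<m. wa j i) = \<sigma> i + \<mu> * sv i" for i
    proof -
      have "(\<Sum>j<m. wa j i) = (\<Sum>j<m. (w(j1 := a)) j i) - (w(j1 := a)) 0 i + a i"
        unfolding wa_def by (rule sum_upd_col[OF m0])
      also have "(\<Sum>j<m. (w(j1 := a)) j i) = \<sigma> i - w j1 i + a i"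
        unfolding \<sigma>_def by (rule sum_upd_col[OF j1(1)])
      also have "(w(j1 := a)) 0 i = q i" using j1(2) by (simp add: q_def)
      finally have "(\<Sum>j<m. wa j i) = \<sigma> i - p i - q i + 2 * a i" by (simp add: p_def)
      also have "\<dots> = \<sigma> i + \<mu> * sv i" using nu(1)
        by (simp add: \<mu>_def a_def sv_def field_simps)
      finally show ?thesis .
    qed
    have "\<Psi> wa = sq n (\<lambda>i. \<sigma> i + \<mu> * sv i)" unfolding \<Psi>_def using colsum by simp
    also have "\<dots> = sq n \<sigma> + 2 * \<mu> * ip n \<sigma> sv + \<mu>^2 * sq n sv" by (rule sq_lin)
    finally have "\<Psi> wa = \<Psi> w + 2 * \<mu> * ip n \<sigma> sv + \<mu>^2 * sq n sv" using Psiw by simp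
    moreover have "2 * \<mu> * ip n \<sigma> sv > 0" using mupos ips by simp
    moreover have "\<mu>^2 * sq n sv \<ge> 0" using spos by simp
    ultimately show False using le by linarith
  qed
  have main: "\<forall>j<m. \<forall>i<n. w j i = w 0 i"
  proof (intro allI impI)
    fix j i assume "j < m" "i < n"
    then show "w j i = w 0 i" using merge[of j i] by (cases "j = 0") auto
  qed
  have "G w = norm (hatp L (vec_of n x (w 0)))"
  proof -
    have "L (\<lambda>j. vec_of n x (w j)) = L (\<lambda>_. vec_of n x (w 0))"
      by (rule mlin_dep[OF ml]) (use main in \<open>auto intro: vec_of_cong\<close>)
    then show ?thesis by (simp add: G_def hatp_def)
  qed
  also have "\<dots> \<le> B" using B w(1) m by (auto simp: K_def U_def)
  finally have SB: "S \<le> B" using w(1) by (simp add: K_def)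
  define ut where "ut = (\<lambda>j i. if j < m \<and> i < n then u j i else 0)"
  have "ut \<in> U"
  proof -
    have sqt: "sq n (ut j) = sq n (u j)" if "j < m" for j
      unfolding sq_def ut_def using that by (intro sum.cong) auto
    have "\<bar>ut j i\<bar> \<le> 1" for j i
    proof (cases "j < m \<and> i < n")
      case True
      then have "(u j i)^2 \<le> 1" using sq_comp_le[of i n "u j"] u by auto
      then show ?thesis using True by (simp add: ut_def abs_square_le_1)
    next
      case False
      then have "ut j i = 0" unfolding ut_def by meson
      then show ?thesis by simp
    qed
    then show ?thesis unfolding U_def Box_def using sqt u by (auto simp: ut_def)
  qed
  then have "G ut \<le> S" using u0 by (simp add: S_def)
  moreover have "G ut = norm (L (\<lambda>j. vec_of n x (u j)))"
  proof -
    have "L (\<lambda>j. vec_of n x (ut j)) = L (\<lambda>j. vec_of n x (u j))"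
      by (rule mlin_dep[OF ml]) (auto simp: ut_def intro: vec_of_cong)
    then show ?thesis by (simp add: G_def)
  qed
  ultimately show ?thesis using SB by simp
qed



lemma bi_le:
  assumes "j < (\<Sum>l<Suc i. k l)"
  shows "block_idx k j \<le> i"
  unfolding block_idx_def by (rule Least_le) (rule assms)

lemma bi_lt:
  assumes "(\<Sum>i<n. k i) = m" "j < m" "n \<ge> 1"
  shows "block_idx k j < n"
proof -
  have "Suc (n - 1) = n" using assms(3) by simp
  then have "j < (\<Sum>l<Suc (n-1). k l)" using assms by simp
  then have "block_idx k j \<le> n - 1" by (rule bi_le)
  then show ?thesis using assms(3) by simp
qed

lemma bi_two:
  assumes "k 0 + k 1 = m" "j < m"
  shows "block_idx k j = (if j < k 0 then 0 else 1)"
proof (cases "j < k 0")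
  case True
  then have "j < (\<Sum>l<Suc 0. k l)" by simp
  then have "block_idx k j \<le> 0" by (rule bi_le)
  then show ?thesis using True by simp
next
  case False
  have "j < (\<Sum>l<Suc 1. k l)" using assms by simp
  then have le: "block_idx k j \<le> 1" by (rule bi_le)
  have ex: "\<exists>i. j < (\<Sum>l<Suc i. k l)" using \<open>j < (\<Sum>l<Suc 1. k l)\<close> by blast
  have "j < (\<Sum>l<Suc (block_idx k j). k l)" unfolding block_idx_def using ex by (rule LeastI_ex)
  have "block_idx k j \<noteq> 0"
  proof
    assume "block_idx k j = 0"
    with \<open>j < (\<Sum>l<Suc (block_idx k j). k l)\<close> have "j < k 0" by simp
    with False show False by simp
  qed
  then show ?thesis using le False by simp
qed

lemma vec_of_ind:
  assumes "b < n"
  shows "vec_of n x (\<lambda>i. if i = b then 1 else 0) = x b"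
proof -
  have "vec_of n x (\<lambda>i. if i = b then 1 else 0) = (\<Sum>i<n. if i = b then x b else 0)"
    unfolding vec_of_def by (rule sum.cong) auto
  also have "\<dots> = x b" using assms by simp
  finally show ?thesis .
qed

lemma sq_ind:
  assumes "b < n"
  shows "sq n (\<lambda>i. if i = b then 1 else 0) = 1"
proof -
  have "sq n (\<lambda>i. if i = b then 1 else 0) = (\<Sum>i<n. if i = b then 1 else 0)"
    unfolding sq_def by (rule sum.cong) auto
  also have "\<dots> = 1" using assms by simp
  finally show ?thesis .
qed

lemma Lpow_bound:
  fixes L :: "(nat \<Rightarrow> 'a::real_normed_vector) \<Rightarrow> 'b::real_normed_vector"
  assumes ml: "mlinear m L" and ms: "msymmetric m L" and mc: "mcontinuous m L"
    and m: "m \<ge> 1" and n: "n \<ge> 1"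
    and k: "(\<Sum>i<n. k i) = m" and xs: "\<forall>i<n. norm (xs i) \<le> 1"
    and c: "\<forall>i<n. c i \<ge> 0"
  shows "(\<Prod>j<m. c (block_idx k j)) * norm (Lpow L k xs) \<le> hat_norm L * sqrt (\<Sum>i<n. (c i)^2) ^ m"
proof -
  define x where "x i = c i *\<^sub>R xs i" for i
  define B where "B = hat_norm L * sqrt (\<Sum>i<n. (c i)^2) ^ m"
  have Hnn: "hat_norm L \<ge> 0"
  proof -
    have "norm (hatp L 0) \<le> hat_norm L"
      unfolding hat_norm_def by (rule cSUP_upper[OF _ hatp_bdd[OF ml mc m]]) simp
    then show ?thesis by (meson norm_ge_zero order_trans)
  qed
  have Bh: "\<forall>t. sq n t = 1 \<longrightarrow> norm (hatp L (vec_of n x t)) \<le> B"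
  proof (intro allI impI)
    fix t assume t: "sq n t = 1"
    have "norm (vec_of n x t) \<le> (\<Sum>i<n. norm (t i *\<^sub>R x i))"
      unfolding vec_of_def by (rule norm_sum)
    also have "\<dots> \<le> (\<Sum>i<n. \<bar>t i\<bar> * \<bar>c i\<bar>)"
    proof (rule sum_mono)
      fix i assume "i \<in> {..<n}"
      then have "norm (xs i) \<le> 1" using xs by auto
      then show "norm (t i *\<^sub>R x i) \<le> \<bar>t i\<bar> * \<bar>c i\<bar>"
        by (simp add: x_def abs_mult mult_left_le)
    qed
    also have "\<dots> \<le> L2_set t {..<n} * L2_set c {..<n}" by (rule L2_set_mult_ineq)
    also have "L2_set t {..<n} = 1" using t by (simp add: L2_set_def sq_def)
    also have "L2_set c {..<n} = sqrt (\<Sum>i<n. (c i)^2)" by (simp add: L2_set_def)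
    finally have nv: "norm (vec_of n x t) \<le> sqrt (\<Sum>i<n. (c i)^2)" by simp
    have "norm (hatp L (vec_of n x t)) \<le> hat_norm L * norm (vec_of n x t) ^ m"
      by (rule hatp_le[OF ml mc m])
    also have "\<dots> \<le> B" unfolding B_def
      by (intro mult_left_mono power_mono nv Hnn norm_ge_zero)
    finally show "norm (hatp L (vec_of n x t)) \<le> B" .
  qed
  define u where "u j = (\<lambda>i. if i = block_idx k j then (1::real) else 0)" for j
  have bl: "block_idx k j < n" if "j < m" for j using bi_lt[OF k that n] .
  have u1: "\<forall>j<m. sq n (u j) = 1" using bl by (simp add: u_def sq_ind)
  have "norm (L (\<lambda>j. vec_of n x (u j))) \<le> B" by (rule banach[OF ml ms mc m n Bh u1])
  moreover have "L (\<lambda>j. vec_of n x (u j)) = L (\<lambda>j. c (block_idx k j) *\<^sub>R xs (block_idx k j))"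
    by (rule mlin_dep[OF ml]) (simp add: u_def vec_of_ind bl x_def)
  moreover have "\<dots> = (\<Prod>j<m. c (block_idx k j)) *\<^sub>R Lpow L k xs"
    unfolding Lpow_def by (rule mlin_prod_scale[OF ml])
  moreover have "(\<Prod>j<m. c (block_idx k j)) \<ge> 0" using c bl by (auto intro: prod_nonneg)
  ultimately show ?thesis by (simp add: B_def)
qed



lemma exists_y:
  fixes k m :: nat
  assumes "2*k > m"
  shows "\<exists>y>0. sqrt (y^2+1)^m < sqrt 2^m * y^k"
proof -
  define g where "g y = y^(2*k) - ((y^2+1)/2)^m" for y :: real
  have "DERIV g 1 :> (real (2*k) - real m)"
    unfolding g_def by (rule derivative_eq_intros refl | simp)+
  moreover have "0 < real (2*k) - real m" using assms by simp
  ultimately obtain d where d: "d > 0" "\<forall>h>0. h < d \<longrightarrow> g 1 < g (1+h)"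
    using DERIV_pos_inc_right by blast
  define y where "y = 1 + d/2"
  have y: "y > 0" using d by (simp add: y_def)
  have "g 1 < g y" using d unfolding y_def by auto
  then have "((y^2+1)/2)^m < y^(2*k)" by (simp add: g_def)
  then have "(y^2+1)^m < 2^m * y^(2*k)" by (simp add: power_divide divide_less_eq mult.commute)
  then have "sqrt ((y^2+1)^m) < sqrt (2^m * y^(2*k))" by (rule real_sqrt_less_mono)
  moreover have "sqrt ((y^2+1)^m) = sqrt (y^2+1)^m" by (simp add: real_sqrt_power)
  moreover have "sqrt (2^m * y^(2*k)) = sqrt 2^m * y^k"
  proof -
    have "y^(2*k) = (y^k)^2" by (simp add: power_mult[symmetric] mult.commute)
    then have "sqrt (y^(2*k)) = y^k" using y by simp
    then show ?thesis by (simp add: real_sqrt_mult real_sqrt_power)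
  qed
  ultimately show ?thesis using y by auto
qed



lemma prod_if_split: "(\<Prod>j<m. if j < k0 then a else b) = a^(min k0 m) * (b::real)^(m - k0)"
proof (induction m)
  case 0 then show ?case by simp
next
  case (Suc m)
  show ?case
  proof (cases "m < k0")
    case True
    then have "min k0 (Suc m) = Suc (min k0 m)" "Suc m - k0 = m - k0" by auto
    then show ?thesis using Suc True by simp
  next
    case False
    then have "min k0 (Suc m) = min k0 m" "Suc m - k0 = Suc (m - k0)" by auto
    then show ?thesis using Suc False by (simp add: mult.assoc)
  qed
qed

lemma sum2: "(\<Sum>i<(2::nat). k i) = k 0 + (k 1 :: nat)"
  by (simp add: numeral_2_eq_2)

lemma two_bound:
  fixes L :: "(nat \<Rightarrow> 'a::real_normed_vector) \<Rightarrow> 'b::real_normed_vector"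
  assumes ml: "mlinear m L" and ms: "msymmetric m L" and mc: "mcontinuous m L"
    and m: "m \<ge> 1" and odd: "odd m" and k0: "k0 \<le> m"
  shows "\<exists>c. c < sqrt 2 ^ m \<and> (\<forall>k xs. k 0 = k0 \<longrightarrow> (\<Sum>i<2. k i) = m \<longrightarrow> (\<forall>i<2. norm (xs i) \<le> 1)
            \<longrightarrow> norm (Lpow L k xs) \<le> c * hat_norm L)"
proof (cases "k0 = 0 \<or> k0 = m")
  case True
  define i0 :: nat where "i0 = (if k0 = 0 then 1 else 0)"
  have "1 < sqrt 2 ^ m" using m by (intro one_less_power) auto
  moreover have "norm (Lpow L k xs) \<le> 1 * hat_norm L"
    if k: "k 0 = k0" "(\<Sum>i<2. k i) = m" and xs: "\<forall>i<2. norm (xs i) \<le> 1" for k xs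
  proof -
    have k01: "k 0 + k 1 = m" using k(2) by (simp add: sum2)
    have "Lpow L k xs = L (\<lambda>_. xs i0)"
      unfolding Lpow_def
    proof (rule mlin_dep[OF ml])
      fix j assume j: "j < m"
      show "xs (block_idx k j) = xs i0" using True k(1) j bi_two[OF k01 j] by (auto simp: i0_def)
    qed
    then have "norm (Lpow L k xs) = norm (hatp L (xs i0))" by (simp add: hatp_def)
    also have "\<dots> \<le> hat_norm L * norm (xs i0) ^ m" by (rule hatp_le[OF ml mc m])
    also have "\<dots> \<le> hat_norm L * 1"
    proof (rule mult_left_mono)
      have "i0 < 2" by (simp add: i0_def)
      then have "norm (xs i0) \<le> 1" using xs by blast
      then show "norm (xs i0) ^ m \<le> 1" by (simp add: power_le_one)
      have "norm (hatp L 0) \<le> hat_norm L"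
        unfolding hat_norm_def by (rule cSUP_upper[OF _ hatp_bdd[OF ml mc m]]) simp
      then show "0 \<le> hat_norm L" by (meson norm_ge_zero order_trans)
    qed
    finally show ?thesis by simp
  qed
  ultimately show ?thesis by blast
next
  case False
  then have k0p: "0 < k0" "k0 < m" using k0 by auto
  have "2 * k0 \<noteq> m" using odd by auto
  have "\<exists>\<alpha> \<beta>. \<alpha> > 0 \<and> \<beta> > 0 \<and> sqrt (\<alpha>^2 + \<beta>^2)^m < sqrt 2^m * (\<alpha>^k0 * \<beta>^(m-k0))"
  proof (cases "2 * k0 > m")
    case True
    from exists_y[OF True] obtain y where "y > 0" "sqrt (y^2+1)^m < sqrt 2^m * y^k0" by blast
    then show ?thesis by (intro exI[of _ y] exI[of _ 1]) auto
  next
    case False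
    then have "2 * (m - k0) > m" using \<open>2 * k0 \<noteq> m\<close> by auto
    from exists_y[OF this] obtain y where "y > 0" "sqrt (y^2+1)^m < sqrt 2^m * y^(m-k0)" by blast
    then show ?thesis by (intro exI[of _ 1] exI[of _ y]) (auto simp: add.commute)
  qed
  then obtain \<alpha> \<beta> where ab: "\<alpha> > 0" "\<beta> > 0" "sqrt (\<alpha>^2 + \<beta>^2)^m < sqrt 2^m * (\<alpha>^k0 * \<beta>^(m-k0))"
    by blast
  define P where "P = \<alpha>^k0 * \<beta>^(m-k0)"
  define R where "R = sqrt (\<alpha>^2 + \<beta>^2)^m"
  have Ppos: "P > 0" using ab by (simp add: P_def)
  have "R / P < sqrt 2 ^ m" using ab(3) Ppos by (simp add: R_def P_def divide_less_eq)
  moreover have "norm (Lpow L k xs) \<le> (R / P) * hat_norm L"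
    if k: "k 0 = k0" "(\<Sum>i<2. k i) = m" and xs: "\<forall>i<2. norm (xs i) \<le> 1" for k xs
  proof -
    define cc where "cc i = (if i = 0 then \<alpha> else \<beta>)" for i :: nat
    have k01: "k 0 + k 1 = m" using k(2) by (simp add: sum2)
    have cc0: "\<forall>i<2. cc i \<ge> 0" using ab by (simp add: cc_def)
    have "(\<Prod>j<m. cc (block_idx k j)) * norm (Lpow L k xs) \<le> hat_norm L * sqrt (\<Sum>i<2. (cc i)^2) ^ m"
      by (rule Lpow_bound[OF ml ms mc m _ k(2) xs cc0]) simp
    moreover have "(\<Prod>j<m. cc (block_idx k j)) = P"
    proof -
      have "(\<Prod>j<m. cc (block_idx k j)) = (\<Prod>j<m. if j < k0 then \<alpha> else \<beta>)"
        by (rule prod.cong) (auto simp: bi_two[OF k01] cc_def k(1))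
      also have "\<dots> = P" using k0p by (simp add: prod_if_split P_def)
      finally show ?thesis .
    qed
    moreover have "sqrt (\<Sum>i<2. (cc i)^2) ^ m = R" by (simp add: sum2 cc_def R_def numeral_2_eq_2)
    ultimately have "P * norm (Lpow L k xs) \<le> hat_norm L * R" by simp
    then show ?thesis using Ppos by (simp add: field_simps)
  qed
  ultimately show ?thesis by blast
qed



lemma pow_powr_inv:
  fixes x :: real
  assumes "0 \<le> x" "m \<ge> 1"
  shows "(x ^ m) powr (1 / real m) = x"
proof (cases "x = 0")
  case True then show ?thesis using assms by (simp add: zero_power)
next
  case False
  then have x: "x > 0" using assms by simp
  have "(x ^ m) powr (1 / real m) = (x powr real m) powr (1 / real m)" using x by (simp add: powr_realpow)
  also have "\<dots> = x powr (real m * (1 / real m))" by (simp add: powr_powr)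
  also have "real m * (1 / real m) = 1" using assms by simp
  finally show ?thesis using x by simp
qed

lemma sup_bound:
  fixes f :: "'p \<Rightarrow> real"
  assumes "P \<noteq> {}" "\<forall>p\<in>P. f p \<le> M" "\<forall>p\<in>P. 0 \<le> f p"
  shows "0 \<le> (SUP p\<in>P. f p)" "(SUP p\<in>P. f p) \<le> M"
proof -
  show "(SUP p\<in>P. f p) \<le> M" using assms by (intro cSUP_least) auto
  obtain p where p: "p \<in> P" using assms by blast
  have bdd: "bdd_above (f ` P)" using assms(2) by (auto simp: bdd_above_def)
  have "f p \<le> (SUP p\<in>P. f p)" by (rule cSUP_upper[OF p bdd])
  then show "0 \<le> (SUP p\<in>P. f p)" using assms(3) p by (meson order_trans)
qed

theorem mainTheorem2:
  fixes L :: "(nat \<Rightarrow> 'a::real_normed_vector) \<Rightarrow> 'b::real_normed_vector"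
    and m n :: nat
  assumes "m \<ge> 1" and "n \<ge> 2"
    and "mlinear m L" and "msymmetric m L" and "mcontinuous m L"
    and "hatp L \<noteq> (\<lambda>_. 0)"
  shows "(norm_n m n L / hat_norm L) powr (1 / real m) \<le> sqrt (real n)
       \<and> ((n = 2 \<and> odd m) \<longrightarrow> (norm_n m 2 L / hat_norm L) powr (1 / real m) < sqrt 2)"
proof -
  note m = assms(1) and ml = assms(3) and ms = assms(4) and mc = assms(5)
  have n1: "n \<ge> 1" using assms(2) by simp
  define H where "H = hat_norm L"
  have Hpos: "H > 0" unfolding H_def by (rule hat_norm_pos[OF ml mc m assms(6)])
  define PS :: "nat \<Rightarrow> ((nat \<Rightarrow> nat) \<times> (nat \<Rightarrow> 'a)) set"
    where "PS n' = {(k, xs). (\<Sum>i<n'. k i) = m \<and> (\<forall>i<n'. norm (xs i) \<le> (1::real))}" for n'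
  have nn: "norm_n m n' L = (SUP p\<in>PS n'. norm (Lpow L (fst p) (snd p)))" for n'
    by (simp add: norm_n_def PS_def)
  have PSne: "PS n' \<noteq> {}" if "n' \<ge> 1" for n'
  proof -
    have "(\<lambda>i. if i = 0 then m else 0, \<lambda>_. 0) \<in> PS n'"
      using that by (simp add: PS_def)
    then show ?thesis by blast
  qed
  have part1: "(norm_n m n L / H) powr (1 / real m) \<le> sqrt (real n)"
  proof -
    have bnd: "\<forall>p\<in>PS n. norm (Lpow L (fst p) (snd p)) \<le> sqrt (real n) ^ m * H"
    proof
      fix p assume p: "p \<in> PS n"
      then have k: "(\<Sum>i<n. fst p i) = m" and xs: "\<forall>i<n. norm (snd p i) \<le> 1"
        by (auto simp: PS_def)
      have "(\<Prod>j<m. (\<lambda>_. 1::real) (block_idx (fst p) j)) * norm (Lpow L (fst p) (snd p))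
          \<le> hat_norm L * sqrt (\<Sum>i<n. ((\<lambda>_. 1::real) i)^2) ^ m"
        by (rule Lpow_bound[OF ml ms mc m n1 k xs]) simp
      then show "norm (Lpow L (fst p) (snd p)) \<le> sqrt (real n) ^ m * H" by (simp add: H_def mult.commute)
    qed
    have "0 \<le> norm_n m n L" "norm_n m n L \<le> sqrt (real n) ^ m * H"
      unfolding nn using sup_bound[OF PSne[OF n1] bnd] by auto
    then have r: "0 \<le> norm_n m n L / H" "norm_n m n L / H \<le> sqrt (real n) ^ m"
      using Hpos by (auto simp: divide_le_eq)
    have "(norm_n m n L / H) powr (1 / real m) \<le> (sqrt (real n) ^ m) powr (1 / real m)"
      by (rule powr_mono2) (use r in auto)
    also have "\<dots> = sqrt (real n)" by (rule pow_powr_inv) (use m in auto)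
    finally show ?thesis .
  qed
  have part2: "(norm_n m 2 L / H) powr (1 / real m) < sqrt 2" if odd: "odd m"
  proof -
    define Q where "Q k0 c \<longleftrightarrow> c < sqrt 2 ^ m \<and> (\<forall>k xs. k 0 = k0 \<longrightarrow> (\<Sum>i<2. k i) = m \<longrightarrow> (\<forall>i<2. norm (xs i) \<le> 1)
            \<longrightarrow> norm (Lpow L k xs) \<le> c * hat_norm L)" for k0 c
    have ex: "\<forall>k0. \<exists>c. k0 \<le> m \<longrightarrow> Q k0 c"
    proof
      fix k0
      show "\<exists>c. k0 \<le> m \<longrightarrow> Q k0 c"
      proof (cases "k0 \<le> m")
        case True
        from two_bound[OF ml ms mc m odd True] obtain c where "Q k0 c" unfolding Q_def by blast
        then show ?thesis by blast
      qed simp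
    qed
    from choice[OF ex] obtain cf where cfQ: "\<forall>k0. k0 \<le> m \<longrightarrow> Q k0 (cf k0)" by blast
    have cf: "cf k0 < sqrt 2 ^ m \<and> (\<forall>k xs. k 0 = k0 \<longrightarrow> (\<Sum>i<2. k i) = m \<longrightarrow> (\<forall>i<2. norm (xs i) \<le> 1)
            \<longrightarrow> norm (Lpow L k xs) \<le> cf k0 * hat_norm L)" if "k0 \<le> m" for k0
      using cfQ that unfolding Q_def by blast
    define C where "C = Max (cf ` {..m})"
    have C: "C < sqrt 2 ^ m" unfolding C_def using cf by (subst Max_less_iff) auto
    have cfC: "cf k0 \<le> C" if "k0 \<le> m" for k0 unfolding C_def using that by (intro Max_ge) auto
    have bnd: "\<forall>p\<in>PS 2. norm (Lpow L (fst p) (snd p)) \<le> C * H"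
    proof
      fix p assume p: "p \<in> PS 2"
      then have k: "(\<Sum>i<2. fst p i) = m" and xs: "\<forall>i<2. norm (snd p i) \<le> 1"
        by (auto simp: PS_def)
      have k0: "fst p 0 \<le> m" using k by (simp add: sum2)
      have "norm (Lpow L (fst p) (snd p)) \<le> cf (fst p 0) * H"
        using cf[OF k0] k xs by (simp add: H_def)
      also have "\<dots> \<le> C * H" using cfC[OF k0] Hpos by (simp add: mult_right_mono)
      finally show "norm (Lpow L (fst p) (snd p)) \<le> C * H" .
    qed
    have "0 \<le> norm_n m 2 L" "norm_n m 2 L \<le> C * H"
      unfolding nn using sup_bound[OF PSne bnd] by auto
    then have r: "0 \<le> norm_n m 2 L / H" "norm_n m 2 L / H \<le> C"
      using Hpos by (auto simp: divide_le_eq)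
    then have r2: "norm_n m 2 L / H < sqrt 2 ^ m" using C by linarith
    have "(norm_n m 2 L / H) powr (1 / real m) < (sqrt 2 ^ m) powr (1 / real m)"
      by (rule powr_less_mono2) (use r r2 m in auto)
    also have "\<dots> = sqrt 2" by (rule pow_powr_inv) (use m in auto)
    finally show ?thesis .
  qed
  show ?thesis using part1 part2 unfolding H_def by blast
qed

end
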